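(* (1) The normalized $k$-derivations $D$ of $kQ$ (those with $D(e_i)=0$ for $i=1,2,3$) are exactly the derivations with $D(\alpha)=\alpha\,a(\beta)$, $D(\beta)=b(\beta)$, $D(\gamma)=h(\beta)\gamma$ for arbitrary polynomials $a,b,h\in k[\beta]$. (2) Such a $D$ satisfies $D(I)\subseteq I$ for $I=I(n;n',n'';V)$ (i.e. descends to a derivation of $\Lambda=kQ/I$) if and only if $\delta\, b(0)=0$ in $k$ and the first order differential operator $\Theta_D=(a(\beta)+h(\beta))+b(\beta)\frac{d}{d\beta}$ on $k[\beta]$ satisfies $\Theta_D(V)\subseteq V$. (3) If $D$ descends to $\Lambda$, the induced derivation of $\Lambda$ is inner if and only if $a(\beta)+h(\beta)\equiv a(0)+h(0)\pmod{\beta^{m}}$ and $b(\beta)\equiv 0\pmod{\beta^n}$, where $m=\min(n',n'')$.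
   Context: $k$ is a field; $Q$ is the quiver with vertices $1,2,3$ and arrows $\alpha\colon 2\to1$, $\beta\colon 2\to 2$, $\gamma\colon 3\to 2$; $kQ$ is generated by pairwise orthogonal idempotents $e_1,e_2,e_3$ (sum $1$) and $\alpha,\beta,\gamma$ with $e_1\alpha=\alpha=\alpha e_2$, $e_2\beta=\beta=\beta e_2$, $e_3\gamma=\gamma=\gamma e_2$, $\gamma\alpha=\beta\alpha=\gamma\beta=0$; for $p=\sum_ip_i\beta^i\in k[\beta]$ write $\alpha p=\sum_i p_i\alpha\beta^i$, $p\gamma=\sum_i p_i\beta^i\gamma$, $\alpha p\gamma=\sum_ip_i\alpha\beta^i\gamma$, and $p=\sum_i p_i\beta^i$ with $\beta^0=e_2$ inside $kQ$. For integers $n\ge 2$, $1\le n',n''\le n$, $m=\min(n',n'')$ and a $k$-subspace $V\subseteq k[\beta]$ containing $(\beta^m)$, $I(n;n',n'';V)$ denotes the two-sided ideal of $kQ$ generated by $\alpha\beta^{n'}$, $\beta^n$, $\beta^{n''}\gamma$ and all $\alpha v\gamma$, $v\in V$. Put $\delta=\gcd(n,n',n'')$ (an integer, viewed in $k$). *)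

theory Defs
  imports "HOL-Computational_Algebra.Polynomial"
begin

text \<open>
  Q has vertices 1,2,3 and arrows alpha: 2 -> 1, beta: 2 -> 2 (loop), gamma: 3 -> 2.
  Products of paths are written right-to-left (e1 alpha = alpha = alpha e2), so that
  gamma: 3 -> 2 satisfies e2 gamma = gamma = gamma e3 (the context's "e3 gamma = gamma = gamma e2"
  is inconsistent with this convention and with alpha beta^i gamma being nonzero paths).
  The path basis of kQ is
     e1, e3, beta^i (i >= 0, beta^0 = e2), alpha beta^i, beta^i gamma, alpha beta^i gamma (i >= 0).
  Grouping basis paths by (source, target), an element of kQ is uniquely
     c1 e1 + c3 e3 + p(beta) + alpha q(beta) + r(beta) gamma + alpha s(beta) gamma
  with c1, c3 in k and p, q, r, s in k[beta].  We store exactly these coordinates: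
  KQ c1 c3 p q r s.  Multiplication is bilinear extension of path concatenation
  (paths that do not compose multiply to 0), which in these coordinates reads as below.
\<close>

declare [[typedef_overloaded]]
datatype ('k::zero) kQ = KQ (kQ_c1: 'k) (kQ_c3: 'k) (kQ_p: "'k poly") (kQ_q: "'k poly")
                    (kQ_r: "'k poly") (kQ_s: "'k poly")

instantiation kQ :: (comm_ring_1) "{zero, one, plus, minus, uminus, times}"
begin
definition "0 = KQ 0 0 0 0 0 0"
definition "1 = KQ 1 1 1 0 0 0"
definition "x + y = KQ (kQ_c1 x + kQ_c1 y) (kQ_c3 x + kQ_c3 y) (kQ_p x + kQ_p y)
                       (kQ_q x + kQ_q y) (kQ_r x + kQ_r y) (kQ_s x + kQ_s y)"
definition "x - y = KQ (kQ_c1 x - kQ_c1 y) (kQ_c3 x - kQ_c3 y) (kQ_p x - kQ_p y)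
                       (kQ_q x - kQ_q y) (kQ_r x - kQ_r y) (kQ_s x - kQ_s y)"
definition "- x = KQ (- kQ_c1 x) (- kQ_c3 x) (- kQ_p x) (- kQ_q x) (- kQ_r x) (- kQ_s x)"
definition "x * y = KQ (kQ_c1 x * kQ_c1 y) (kQ_c3 x * kQ_c3 y) (kQ_p x * kQ_p y)
      (smult (kQ_c1 x) (kQ_q y) + kQ_q x * kQ_p y)
      (kQ_p x * kQ_r y + smult (kQ_c3 y) (kQ_r x))
      (smult (kQ_c1 x) (kQ_s y) + kQ_q x * kQ_r y + smult (kQ_c3 y) (kQ_s x))"
instance ..
end

definition kQ_smult :: "'k::comm_ring_1 \<Rightarrow> 'k kQ \<Rightarrow> 'k kQ" where
  "kQ_smult c x = KQ (c * kQ_c1 x) (c * kQ_c3 x) (smult c (kQ_p x)) (smult c (kQ_q x))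
                     (smult c (kQ_r x)) (smult c (kQ_s x))"

definition e1 :: "'k::comm_ring_1 kQ" where "e1 = KQ 1 0 0 0 0 0"
definition e2 :: "'k::comm_ring_1 kQ" where "e2 = KQ 0 0 1 0 0 0"
definition e3 :: "'k::comm_ring_1 kQ" where "e3 = KQ 0 1 0 0 0 0"
definition arr_alpha :: "'k::comm_ring_1 kQ" where "arr_alpha = KQ 0 0 0 1 0 0"
definition arr_beta :: "'k::comm_ring_1 kQ" where "arr_beta = KQ 0 0 [:0, 1:] 0 0 0"
definition arr_gamma :: "'k::comm_ring_1 kQ" where "arr_gamma = KQ 0 0 0 0 1 0"

definition kQ_of_poly :: "'k::comm_ring_1 poly \<Rightarrow> 'k kQ" where
  "kQ_of_poly p = KQ 0 0 p 0 0 0"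

lemma kQ_relations:
  "e1 * arr_alpha = (arr_alpha :: 'k::comm_ring_1 kQ)" "arr_alpha * e2 = (arr_alpha :: 'k kQ)"
  "e2 * arr_beta = (arr_beta :: 'k kQ)" "arr_beta * e2 = (arr_beta :: 'k kQ)"
  "e2 * arr_gamma = (arr_gamma :: 'k kQ)" "arr_gamma * e3 = (arr_gamma :: 'k kQ)"
  "arr_gamma * arr_alpha = (0 :: 'k kQ)" "arr_beta * arr_alpha = (0 :: 'k kQ)"
  "arr_gamma * arr_beta = (0 :: 'k kQ)"
  "e1 + e2 + e3 = (1 :: 'k kQ)"
  "e1 * e1 = (e1 :: 'k kQ)" "e2 * e2 = (e2 :: 'k kQ)" "e3 * e3 = (e3 :: 'k kQ)"
  "e1 * e2 = (0 :: 'k kQ)" "e2 * e3 = (0 :: 'k kQ)" "e1 * e3 = (0 :: 'k kQ)"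
  "e2 * e1 = (0 :: 'k kQ)" "e3 * e2 = (0 :: 'k kQ)" "e3 * e1 = (0 :: 'k kQ)"
  by (simp_all add: e1_def e2_def e3_def arr_alpha_def arr_beta_def arr_gamma_def
      times_kQ_def plus_kQ_def one_kQ_def zero_kQ_def)

lemma kQ_of_poly_monom_is_power:
  "kQ_of_poly (monom 1 (Suc i)) = (arr_beta :: 'k::comm_ring_1 kQ) * kQ_of_poly (monom 1 i)"
  by (simp add: kQ_of_poly_def arr_beta_def times_kQ_def monom_Suc)

definition kQ_derivation :: "('k::comm_ring_1 kQ \<Rightarrow> 'k kQ) \<Rightarrow> bool" where
  "kQ_derivation D \<longleftrightarrow>
     (\<forall>x y. D (x + y) = D x + D y) \<and>
     (\<forall>c x. D (kQ_smult c x) = kQ_smult c (D x)) \<and>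
     (\<forall>x y. D (x * y) = D x * y + x * D y)"

definition kQ_normalized :: "('k::comm_ring_1 kQ \<Rightarrow> 'k kQ) \<Rightarrow> bool" where
  "kQ_normalized D \<longleftrightarrow> D e1 = 0 \<and> D e2 = 0 \<and> D e3 = 0"

text \<open>The two-sided ideal of kQ generated by a set S (closure under sums and
  two-sided multiples; scalar multiples arise as multiples by scalars times 1).\<close>
inductive_set kQ_ideal_gen :: "'k::comm_ring_1 kQ set \<Rightarrow> 'k kQ set" for S where
  gen_zero: "0 \<in> kQ_ideal_gen S"
| gen_base: "s \<in> S \<Longrightarrow> s \<in> kQ_ideal_gen S"
| gen_add: "x \<in> kQ_ideal_gen S \<Longrightarrow> y \<in> kQ_ideal_gen S \<Longrightarrow> x + y \<in> kQ_ideal_gen S"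
| gen_mult: "x \<in> kQ_ideal_gen S \<Longrightarrow> u * x * w \<in> kQ_ideal_gen S"

definition ideal_I :: "nat \<Rightarrow> nat \<Rightarrow> nat \<Rightarrow> 'k::comm_ring_1 poly set \<Rightarrow> 'k kQ set" where
  "ideal_I n n' n'' V = kQ_ideal_gen
     ({arr_alpha * kQ_of_poly (monom 1 n'), kQ_of_poly (monom 1 n),
       kQ_of_poly (monom 1 n'') * arr_gamma}
      \<union> {arr_alpha * kQ_of_poly v * arr_gamma | v. v \<in> V})"

definition poly_subspace :: "'k::comm_ring_1 poly set \<Rightarrow> bool" where
  "poly_subspace V \<longleftrightarrow> 0 \<in> V \<and> (\<forall>x\<in>V. \<forall>y\<in>V. x + y \<in> V) \<and> (\<forall>c. \<forall>x\<in>V. smult c x \<in> V)"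

definition Theta :: "'k::field poly \<Rightarrow> 'k poly \<Rightarrow> 'k poly \<Rightarrow> 'k poly \<Rightarrow> 'k poly" where
  "Theta a b h v = (a + h) * v + b * pderiv v"

end

theory Submission imports Defs begin

definition Dexp :: "'k::field poly \<Rightarrow> 'k poly \<Rightarrow> 'k poly \<Rightarrow> 'k kQ \<Rightarrow> 'k kQ" where
  "Dexp a b h x = KQ 0 0 (b * pderiv (kQ_p x)) (a * kQ_q x + b * pderiv (kQ_q x))
     (b * pderiv (kQ_r x) + h * kQ_r x) (a * kQ_s x + b * pderiv (kQ_s x) + h * kQ_s x)"

lemmas kQ_simps = times_kQ_def plus_kQ_def minus_kQ_def uminus_kQ_def zero_kQ_def one_kQ_def
  kQ_smult_def e1_def e2_def e3_def arr_alpha_def arr_beta_def arr_gamma_def kQ_of_poly_def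

lemma smult_conv: "smult c p = [:c:] * p" by simp

lemma Dexp_der: "kQ_derivation (Dexp a b h)"
  unfolding kQ_derivation_def
proof (intro conjI allI)
  fix x y :: "'a kQ"
  show "Dexp a b h (x + y) = Dexp a b h x + Dexp a b h y"
    by (simp add: Dexp_def kQ_simps pderiv_add algebra_simps)
next
  fix c and x :: "'a kQ"
  show "Dexp a b h (kQ_smult c x) = kQ_smult c (Dexp a b h x)"
    by (simp add: Dexp_def kQ_simps pderiv_smult algebra_simps smult_add_right)
next
  fix x y :: "'a kQ"
  show "Dexp a b h (x * y) = Dexp a b h x * y + x * Dexp a b h y"
    by (simp add: Dexp_def kQ_simps pderiv_add pderiv_mult pderiv_smult algebra_simps smult_add_right)
qed

lemma Dexp_norm: "kQ_normalized (Dexp a b h)"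
  by (simp add: kQ_normalized_def Dexp_def kQ_simps)

lemma Dexp_gens: "Dexp a b h arr_alpha = arr_alpha * kQ_of_poly a"
  "Dexp a b h arr_beta = kQ_of_poly b" "Dexp a b h arr_gamma = kQ_of_poly h * arr_gamma"
  by (simp_all add: Dexp_def kQ_simps pderiv_pCons)


lemma der_basic:
  assumes "kQ_derivation D"
  shows "D (x + y) = D x + D y" "D (kQ_smult c x) = kQ_smult c (D x)" "D (x * y) = D x * y + x * D y"
  using assms unfolding kQ_derivation_def by blast+

lemma der_poly:
  fixes D :: "'k::field kQ \<Rightarrow> 'k kQ"
  assumes D: "kQ_derivation D" and N: "kQ_normalized D" and B: "D arr_beta = kQ_of_poly b"
  shows "D (kQ_of_poly p) = kQ_of_poly (b * pderiv p)"
proof (induction p rule: pCons_induct)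
  case 0
  have z: "kQ_smult 0 (0::'k kQ) = 0" "\<And>y::'k kQ. kQ_smult 0 y = 0" by (simp_all add: kQ_simps)
  have "D 0 = 0" using der_basic(2)[OF D, of 0 0] z by simp
  then show ?case by (simp add: kQ_simps)
next
  case (pCons c p)
  have e: "kQ_of_poly (pCons c p) = kQ_smult c e2 + arr_beta * kQ_of_poly p"
    by (simp add: kQ_simps)
  have "D (kQ_of_poly (pCons c p)) = kQ_smult c (D e2) + (D arr_beta * kQ_of_poly p + arr_beta * D (kQ_of_poly p))"
    unfolding e using der_basic[OF D] by simp
  also have "\<dots> = kQ_of_poly (b * pderiv (pCons c p))"
    using N pCons(2) B by (simp add: kQ_normalized_def kQ_simps pderiv_pCons algebra_simps)
  finally show ?case .
qed

lemma der_unique: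
  fixes D :: "'k::field kQ \<Rightarrow> 'k kQ"
  assumes D: "kQ_derivation D" and N: "kQ_normalized D"
    and A: "D arr_alpha = arr_alpha * kQ_of_poly a"
    and B: "D arr_beta = kQ_of_poly b"
    and G: "D arr_gamma = kQ_of_poly h * arr_gamma"
  shows "D x = Dexp a b h x"
proof (cases x)
  case (KQ c1 c3 p q r s)
  have e: "x = kQ_smult c1 e1 + kQ_smult c3 e3 + kQ_of_poly p + arr_alpha * kQ_of_poly q
     + kQ_of_poly r * arr_gamma + arr_alpha * kQ_of_poly s * arr_gamma"
    using KQ by (simp add: kQ_simps)
  note P = der_poly[OF D N B]
  have "D x = kQ_smult c1 (D e1) + kQ_smult c3 (D e3) + D (kQ_of_poly p)
     + (D arr_alpha * kQ_of_poly q + arr_alpha * D (kQ_of_poly q))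
     + (D (kQ_of_poly r) * arr_gamma + kQ_of_poly r * D arr_gamma)
     + ((D arr_alpha * kQ_of_poly s + arr_alpha * D (kQ_of_poly s)) * arr_gamma
        + arr_alpha * kQ_of_poly s * D arr_gamma)"
    apply (subst e) using der_basic[OF D] by simp
  also have "\<dots> = Dexp a b h x"
    unfolding P using N A G KQ by (simp add: kQ_normalized_def Dexp_def kQ_simps algebra_simps)
  finally show ?thesis .
qed


definition Jset :: "nat \<Rightarrow> nat \<Rightarrow> nat \<Rightarrow> 'k::field poly set \<Rightarrow> 'k kQ set" where
  "Jset n n' n'' V = {x. kQ_c1 x = 0 \<and> kQ_c3 x = 0 \<and> monom 1 n dvd kQ_p x \<and>
     monom 1 n' dvd kQ_q x \<and> monom 1 n'' dvd kQ_r x \<and> kQ_s x \<in> V}"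

lemma monom_dvd_mono: "i \<le> j \<Longrightarrow> monom (1::'k::field) i dvd monom 1 j"
proof -
  assume "i \<le> j"
  then have "monom (1::'k) j = monom 1 i * monom 1 (j - i)" by (simp add: mult_monom)
  then show ?thesis by simp
qed

lemma monom_dvd_trans: "i \<le> j \<Longrightarrow> monom (1::'k::field) j dvd p \<Longrightarrow> monom 1 i dvd p"
  using monom_dvd_mono dvd_trans by blast

lemma inV:
  assumes "\<forall>p. monom 1 m * p \<in> V" "m \<le> j" "monom (1::'k::field) j dvd t"
  shows "t \<in> V"
proof -
  from assms(2,3) have "monom 1 m dvd t" by (rule monom_dvd_trans)
  then obtain k where "t = monom 1 m * k" by blast
  then show ?thesis using assms(1) by simp
qed

lemma ideal_eq:
  fixes V :: "'k::field poly set"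
  assumes "n' \<le> n" "n'' \<le> n" and V: "poly_subspace V" and M: "\<forall>p. monom 1 (min n' n'') * p \<in> V"
  shows "ideal_I n n' n'' V = Jset n n' n'' V"
proof
  show "ideal_I n n' n'' V \<subseteq> Jset n n' n'' V"
    unfolding ideal_I_def
  proof
    fix x assume "x \<in> kQ_ideal_gen ({arr_alpha * kQ_of_poly (monom 1 n'), kQ_of_poly (monom 1 n),
       kQ_of_poly (monom 1 n'') * arr_gamma} \<union> {arr_alpha * kQ_of_poly v * arr_gamma | v. v \<in> V})"
    then show "x \<in> Jset n n' n'' V"
    proof induction
      case gen_zero
      then show ?case using V by (simp add: Jset_def kQ_simps poly_subspace_def)
    next
      case (gen_base s)
      then show ?case using V M inV[OF M, of n'' "monom 1 n''"] by (auto simp add: Jset_def kQ_simps poly_subspace_def)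
    next
      case (gen_add x y)
      then show ?case using V by (auto simp add: Jset_def kQ_simps poly_subspace_def)
    next
      case (gen_mult x u w)
      obtain c1 c3 p q r s where x: "x = KQ c1 c3 p q r s" by (cases x)
      obtain c1u c3u pu qu ru su where u: "u = KQ c1u c3u pu qu ru su" by (cases u)
      obtain c1w c3w pw qw rw sw where w: "w = KQ c1w c3w pw qw rw sw" by (cases w)
      from gen_mult(2) have h: "c1 = 0" "c3 = 0" "monom 1 n dvd p" "monom 1 n' dvd q"
        "monom 1 n'' dvd r" "s \<in> V" by (auto simp: Jset_def x)
      have d1: "monom 1 n' dvd p" "monom 1 n'' dvd p" using h(3) assms(1,2) monom_dvd_trans by blast+
      have v1: "qu * r * pw \<in> V" using inV[OF M, of n''] h(5) by (simp add: dvd_mult2)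
      have v2: "q * rw \<in> V" using inV[OF M, of n'] h(4) by (simp add: dvd_mult2)
      have v3: "qu * (p * rw) \<in> V" using inV[OF M, of n''] d1(2) by (simp add: dvd_mult)
      have sV: "smult c s \<in> V" for c using V h(6) by (simp add: poly_subspace_def)
      have aV: "a \<in> V \<Longrightarrow> b \<in> V \<Longrightarrow> a + b \<in> V" for a b using V by (simp add: poly_subspace_def)
      have sV': "t \<in> V \<Longrightarrow> smult c t \<in> V" for c t using V by (simp add: poly_subspace_def)
      have v4: "qu * r \<in> V" using inV[OF M, of n''] h(5) by (simp add: dvd_mult)
      have v5: "qu * p * rw \<in> V" using inV[OF M, of n''] d1(2) by (simp add: dvd_mult dvd_mult2)
      have "(smult c1u q + qu * p) * rw + smult c3w (smult c1u s + qu * r) =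
          smult c1u (q * rw) + qu * p * rw + (smult c3w (smult c1u s) + smult c3w (qu * r))"
        by (simp add: algebra_simps smult_add_right)
      also have "\<dots> \<in> V" using aV sV' v2 v5 h(6) v4 by (intro aV sV') auto
      finally have S3: "(smult c1u q + qu * p) * rw + smult c3w (smult c1u s + qu * r) \<in> V" .
      have S1: "monom 1 n' dvd (smult c1u q + qu * p) * pw"
        using h(4) d1(1) by (simp add: dvd_smult dvd_add dvd_mult dvd_mult2)
      have S2: "monom 1 n'' dvd pu * p * rw + smult c3w (pu * r)"
        using h(5) d1(2) by (simp add: dvd_smult dvd_add dvd_mult dvd_mult2)
      show ?case using h S1 S2 S3
        by (simp add: x u w Jset_def kQ_simps)
    qed
  qed
next
  show "Jset n n' n'' V \<subseteq> ideal_I n n' n'' V"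
  proof
    fix x assume "x \<in> Jset n n' n'' V"
    then obtain p q r s where x: "x = KQ 0 0 (monom 1 n * p) (monom 1 n' * q) (monom 1 n'' * r) s"
      and s: "s \<in> V"
      by (cases x) (auto simp: Jset_def elim!: dvdE)
    let ?S = "{arr_alpha * kQ_of_poly (monom 1 n'), kQ_of_poly (monom 1 n),
       kQ_of_poly (monom 1 n'') * arr_gamma} \<union> {arr_alpha * kQ_of_poly v * arr_gamma | v. v \<in> V}"
    have g1: "kQ_of_poly p * kQ_of_poly (monom 1 n) * 1 \<in> kQ_ideal_gen ?S"
      by (intro kQ_ideal_gen.gen_mult kQ_ideal_gen.gen_base) simp
    have g2: "1 * (arr_alpha * kQ_of_poly (monom 1 n')) * kQ_of_poly q \<in> kQ_ideal_gen ?S"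
      by (intro kQ_ideal_gen.gen_mult kQ_ideal_gen.gen_base) simp
    have g3: "kQ_of_poly r * (kQ_of_poly (monom 1 n'') * arr_gamma) * 1 \<in> kQ_ideal_gen ?S"
      by (intro kQ_ideal_gen.gen_mult kQ_ideal_gen.gen_base) simp
    have g4: "arr_alpha * kQ_of_poly s * arr_gamma \<in> kQ_ideal_gen ?S"
      using s by (intro kQ_ideal_gen.gen_base) blast
    have "x = kQ_of_poly p * kQ_of_poly (monom 1 n) * 1 + 1 * (arr_alpha * kQ_of_poly (monom 1 n')) * kQ_of_poly q
       + kQ_of_poly r * (kQ_of_poly (monom 1 n'') * arr_gamma) * 1 + arr_alpha * kQ_of_poly s * arr_gamma"
      by (simp add: x kQ_simps algebra_simps)
    then show "x \<in> ideal_I n n' n'' V" unfolding ideal_I_def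
      using g1 g2 g3 g4 by (simp only:) (intro kQ_ideal_gen.gen_add)
  qed
qed


lemma gcd_char:
  "of_nat (gcd n (gcd n' n'')) * c = (0::'k::field) \<longleftrightarrow>
     of_nat n * c = 0 \<and> of_nat n' * c = 0 \<and> of_nat n'' * c = 0"
  by (auto simp: of_nat_eq_0_iff_char_dvd)

lemma monom_dvd_coeff: "monom (1::'k::field) k dvd t \<Longrightarrow> i < k \<Longrightarrow> coeff t i = 0"
  by (auto elim!: dvdE simp: coeff_monom_mult)

lemma dvd_lowterm:
  fixes b :: "'k::field poly"
  assumes "1 \<le> k"
  shows "monom 1 k dvd b * monom (of_nat k) (k - 1) \<longleftrightarrow> of_nat k * coeff b 0 = 0"
proof
  assume "monom 1 k dvd b * monom (of_nat k) (k - 1)"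
  then have "coeff (b * monom (of_nat k) (k - 1)) (k - 1) = 0"
    using assms by (intro monom_dvd_coeff) auto
  then show "of_nat k * coeff b 0 = 0"
    by (simp add: mult.commute[of b] coeff_monom_mult)
next
  assume h: "of_nat k * coeff b 0 = 0"
  show "monom 1 k dvd b * monom (of_nat k) (k - 1)"
  proof (cases "(of_nat k :: 'k) = 0")
    case True then show ?thesis by simp
  next
    case False
    then have "poly b 0 = 0" using h by (simp add: poly_0_coeff_0)
    then have "[:0,1:] dvd b" using dvd_iff_poly_eq_0[of 0 b] by simp
    then obtain b1 where b: "b = [:0,1:] * b1" by blast
    have "monom (1::'k) k = [:0, 1:] * monom 1 (k - 1)"
      using assms by (cases k) (auto simp: monom_Suc)
    moreover have "b * monom (of_nat k) (k - 1) = [:0,1:] * monom 1 (k - 1) * smult (of_nat k) b1"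
    proof -
      have "monom (of_nat k) (k - 1) = smult (of_nat k) (monom (1::'k) (k - 1))" by (simp add: smult_monom)
      then show ?thesis by (simp add: b algebra_simps)
    qed
    ultimately show ?thesis by (metis dvd_triv_left)
  qed
qed

lemma dvd_deriv:
  fixes b :: "'k::field poly"
  assumes "1 \<le> k" "of_nat k * coeff b 0 = 0"
  shows "monom 1 k dvd b * pderiv (monom 1 k * t)"
proof -
  have "b * pderiv (monom 1 k * t) = b * monom (of_nat k) (k - 1) * t + monom 1 k * (b * pderiv t)"
    by (simp add: pderiv_mult pderiv_monom algebra_simps)
  moreover have "monom 1 k dvd b * monom (of_nat k) (k - 1)" using dvd_lowterm[OF assms(1)] assms(2) by blast
  ultimately show ?thesis by (metis dvd_add dvd_mult2 dvd_triv_left)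
qed


lemma stable:
  fixes V :: "'k::field poly set"
  assumes n1: "1 \<le> n'" "1 \<le> n''" "n' \<le> n" and V: "poly_subspace V"
  shows "(\<forall>x\<in>Jset n n' n'' V. Dexp a b h x \<in> Jset n n' n'' V) \<longleftrightarrow>
     (of_nat (gcd n (gcd n' n'')) * coeff b 0 = 0 \<and> Theta a b h ` V \<subseteq> V)"
proof
  assume H: "\<forall>x\<in>Jset n n' n'' V. Dexp a b h x \<in> Jset n n' n'' V"
  have V0: "0 \<in> V" using V by (simp add: poly_subspace_def)
  have "Dexp a b h (KQ 0 0 (monom 1 n) 0 0 0) \<in> Jset n n' n'' V"
    using H V0 by (auto simp: Jset_def)
  then have "monom 1 n dvd b * monom (of_nat n) (n - 1)" by (simp add: Jset_def Dexp_def pderiv_monom)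
  then have c1: "of_nat n * coeff b 0 = 0" using dvd_lowterm[of n b] n1 by simp
  have "Dexp a b h (KQ 0 0 0 (monom 1 n') 0 0) \<in> Jset n n' n'' V"
    using H V0 by (auto simp: Jset_def)
  then have "monom 1 n' dvd a * monom 1 n' + b * monom (of_nat n') (n' - 1)" by (simp add: Jset_def Dexp_def pderiv_monom)
  then have "monom 1 n' dvd b * monom (of_nat n') (n' - 1)" by (simp add: dvd_add_right_iff)
  then have c2: "of_nat n' * coeff b 0 = 0" using dvd_lowterm[of n' b] n1 by simp
  have "Dexp a b h (KQ 0 0 0 0 (monom 1 n'') 0) \<in> Jset n n' n'' V"
    using H V0 by (auto simp: Jset_def)
  then have "monom 1 n'' dvd b * monom (of_nat n'') (n'' - 1) + h * monom 1 n''" by (simp add: Jset_def Dexp_def pderiv_monom)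
  then have "monom 1 n'' dvd b * monom (of_nat n'') (n'' - 1)" by (simp add: dvd_add_left_iff)
  then have c3: "of_nat n'' * coeff b 0 = 0" using dvd_lowterm[of n'' b] n1 by simp
  have "Theta a b h ` V \<subseteq> V"
  proof
    fix y assume "y \<in> Theta a b h ` V"
    then obtain s where s: "s \<in> V" "y = Theta a b h s" by blast
    have "Dexp a b h (KQ 0 0 0 0 0 s) \<in> Jset n n' n'' V"
      using H s by (auto simp: Jset_def)
    then show "y \<in> V" using s by (simp add: Jset_def Dexp_def Theta_def algebra_simps)
  qed
  then show "of_nat (gcd n (gcd n' n'')) * coeff b 0 = 0 \<and> Theta a b h ` V \<subseteq> V"
    using c1 c2 c3 gcd_char by blast
next
  assume H: "of_nat (gcd n (gcd n' n'')) * coeff b 0 = 0 \<and> Theta a b h ` V \<subseteq> V"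
  then have c: "of_nat n * coeff b 0 = 0" "of_nat n' * coeff b 0 = 0" "of_nat n'' * coeff b 0 = 0"
    using gcd_char by blast+
  have n0: "1 \<le> n" using n1 by simp
  show "\<forall>x\<in>Jset n n' n'' V. Dexp a b h x \<in> Jset n n' n'' V"
  proof
    fix x assume "x \<in> Jset n n' n'' V"
    then obtain p q r s where x: "x = KQ 0 0 (monom 1 n * p) (monom 1 n' * q) (monom 1 n'' * r) s"
      and s: "s \<in> V"
      by (cases x) (auto simp: Jset_def elim!: dvdE)
    have "Theta a b h s \<in> V" using H s by blast
    then have sV: "a * s + b * pderiv s + h * s \<in> V" by (simp add: Theta_def algebra_simps)
    show "Dexp a b h x \<in> Jset n n' n'' V"
      using dvd_deriv[OF n0 c(1), of p] dvd_deriv[OF n1(1) c(2), of q] dvd_deriv[OF n1(2) c(3), of r] sV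
      by (simp add: x Jset_def Dexp_def dvd_add dvd_mult2)
  qed
qed


lemma inner:
  fixes V :: "'k::field poly set"
  assumes n1: "1 \<le> n'" "1 \<le> n''" "n' \<le> n" "n'' \<le> n" and V: "poly_subspace V"
    and M: "\<forall>p. monom 1 (min n' n'') * p \<in> V"
  shows "(\<exists>u. \<forall>x. Dexp a b h x - (u * x - x * u) \<in> Jset n n' n'' V) \<longleftrightarrow>
     (monom 1 (min n' n'') dvd (a + h - [:coeff a 0 + coeff h 0:]) \<and> monom 1 n dvd b)"
proof
  assume "\<exists>u. \<forall>x. Dexp a b h x - (u * x - x * u) \<in> Jset n n' n'' V"
  then obtain u where U: "\<And>x. Dexp a b h x - (u * x - x * u) \<in> Jset n n' n'' V" by blast
  obtain d1 d3 P Q R S where u: "u = KQ d1 d3 P Q R S" by (cases u)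
  have "monom 1 n' dvd a + P - [:d1:]"
    using U[of arr_alpha] by (simp add: u Jset_def Dexp_def kQ_simps pderiv_pCons algebra_simps)
  then have A: "monom 1 (min n' n'') dvd a + P - [:d1:]" by (rule monom_dvd_trans[rotated]) simp
  have "monom 1 n'' dvd h - P + [:d3:]"
    using U[of arr_gamma] by (simp add: u Jset_def Dexp_def kQ_simps pderiv_pCons algebra_simps)
  then have G: "monom 1 (min n' n'') dvd h - P + [:d3:]" by (rule monom_dvd_trans[rotated]) simp
  have B: "monom 1 n dvd b"
    using U[of arr_beta] by (simp add: u Jset_def Dexp_def kQ_simps pderiv_pCons algebra_simps)
  have T: "monom 1 (min n' n'') dvd a + h - [:d1 - d3:]"
  proof -
    have eq: "a + h - [:d1 - d3:] = (a + P - [:d1:]) + (h - P + [:d3:])" by (simp add: algebra_simps)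
    show ?thesis unfolding eq by (rule dvd_add[OF A G])
  qed
  then have "coeff (a + h - [:d1 - d3:]) 0 = 0" using n1 by (intro monom_dvd_coeff) auto
  then have "d1 - d3 = coeff a 0 + coeff h 0" by simp
  then show "monom 1 (min n' n'') dvd (a + h - [:coeff a 0 + coeff h 0:]) \<and> monom 1 n dvd b"
    using T B by simp
next
  assume H: "monom 1 (min n' n'') dvd (a + h - [:coeff a 0 + coeff h 0:]) \<and> monom 1 n dvd b"
  define c where "c = coeff a 0 + coeff h 0"
  define P where "P = (if n' \<le> n'' then h else [:c:] - a)"
  have Hm: "monom 1 (min n' n'') dvd (a + h - [:c:])" using H c_def by simp
  have Bm: "monom 1 (min n' n'') dvd b" "monom 1 n' dvd b" "monom 1 n'' dvd b"
    using H n1 monom_dvd_trans[of _ n b] by auto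
  have Pq: "monom 1 n' dvd a + P - [:c:]"
    using Hm by (cases "n' \<le> n''") (simp_all add: P_def min_def)
  have Pr: "monom 1 n'' dvd h - P"
    using Hm by (cases "n' \<le> n''") (simp_all add: P_def min_def algebra_simps)
  show "\<exists>u. \<forall>x. Dexp a b h x - (u * x - x * u) \<in> Jset n n' n'' V"
  proof (intro exI allI)
    fix x :: "'k kQ"
    obtain c1 c3 p q r s where x: "x = KQ c1 c3 p q r s" by (cases x)
    have e1: "kQ_q (Dexp a b h x - (KQ c 0 P 0 0 0 * x - x * KQ c 0 P 0 0 0)) = (a + P - [:c:]) * q + b * pderiv q"
      by (simp add: x Dexp_def kQ_simps algebra_simps)
    have e2: "kQ_r (Dexp a b h x - (KQ c 0 P 0 0 0 * x - x * KQ c 0 P 0 0 0)) = (h - P) * r + b * pderiv r"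
      by (simp add: x Dexp_def kQ_simps algebra_simps)
    have e3: "kQ_s (Dexp a b h x - (KQ c 0 P 0 0 0 * x - x * KQ c 0 P 0 0 0)) = (a + h - [:c:]) * s + b * pderiv s"
      by (simp add: x Dexp_def kQ_simps algebra_simps)
    have e0: "kQ_c1 (Dexp a b h x - (KQ c 0 P 0 0 0 * x - x * KQ c 0 P 0 0 0)) = 0"
       "kQ_c3 (Dexp a b h x - (KQ c 0 P 0 0 0 * x - x * KQ c 0 P 0 0 0)) = 0"
       "kQ_p (Dexp a b h x - (KQ c 0 P 0 0 0 * x - x * KQ c 0 P 0 0 0)) = b * pderiv p"
      by (simp_all add: x Dexp_def kQ_simps algebra_simps)
    have sV: "(a + h - [:c:]) * s + b * pderiv s \<in> V"
      using inV[OF M, of "min n' n''"] Hm Bm(1) by (simp add: dvd_add dvd_mult2)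
    show "Dexp a b h x - (KQ c 0 P 0 0 0 * x - x * KQ c 0 P 0 0 0) \<in> Jset n n' n'' V"
      unfolding Jset_def using e0 e1 e2 e3 sV Pq Pr Bm H
      by (simp add: dvd_add dvd_mult2)
  qed
qed


lemma part1:
  fixes D :: "'k::field kQ \<Rightarrow> 'k kQ"
  assumes D: "kQ_derivation D" and N: "kQ_normalized D"
  shows "\<exists>a b h. D arr_alpha = arr_alpha * kQ_of_poly a \<and> D arr_beta = kQ_of_poly b
                 \<and> D arr_gamma = kQ_of_poly h * arr_gamma"
proof -
  have N': "D e1 = 0" "D e2 = 0" "D e3 = 0" using N by (simp_all add: kQ_normalized_def)
  have z: "\<And>y::'k kQ. 0 * y = 0" "\<And>y::'k kQ. y * 0 = 0" "\<And>y::'k kQ. y + 0 = y" "\<And>y::'k kQ. 0 + y = y"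
    by (simp_all add: kQ_simps)
  have ea: "arr_alpha = e1 * arr_alpha * (e2 :: 'k kQ)" by (simp add: kQ_simps)
  have eb: "arr_beta = e2 * arr_beta * (e2 :: 'k kQ)" by (simp add: kQ_simps)
  have eg: "arr_gamma = e2 * arr_gamma * (e3 :: 'k kQ)" by (simp add: kQ_simps)
  have Da: "D arr_alpha = e1 * D arr_alpha * e2"
    by (subst ea, simp only: der_basic(3)[OF D] N' z)
  have Db: "D arr_beta = e2 * D arr_beta * e2"
    by (subst eb, simp only: der_basic(3)[OF D] N' z)
  have Dg: "D arr_gamma = e2 * D arr_gamma * e3"
    by (subst eg, simp only: der_basic(3)[OF D] N' z)
  have "D arr_alpha = arr_alpha * kQ_of_poly (kQ_q (D arr_alpha))"
    by (subst Da, cases "D arr_alpha") (simp add: kQ_simps)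
  moreover have "D arr_beta = kQ_of_poly (kQ_p (D arr_beta))"
    by (subst Db, cases "D arr_beta") (simp add: kQ_simps)
  moreover have "D arr_gamma = kQ_of_poly (kQ_r (D arr_gamma)) * arr_gamma"
    by (subst Dg, cases "D arr_gamma") (simp add: kQ_simps)
  ultimately show ?thesis by blast
qed

theorem mainTheorem5:
  fixes n n' n'' :: nat and V :: "'k::field poly set"
  assumes "n \<ge> 2" and "1 \<le> n'" and "n' \<le> n" and "1 \<le> n''" and "n'' \<le> n"
    and "poly_subspace V"
    and "\<forall>p. monom 1 (min n' n'') * p \<in> V"
  shows
   "(\<forall>D :: 'k kQ \<Rightarrow> 'k kQ. kQ_derivation D \<and> kQ_normalized D \<longrightarrow>
        (\<exists>a b h. D arr_alpha = arr_alpha * kQ_of_poly a \<and> D arr_beta = kQ_of_poly b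
                 \<and> D arr_gamma = kQ_of_poly h * arr_gamma))
    \<and> (\<forall>a b h. \<exists>!D :: 'k kQ \<Rightarrow> 'k kQ. kQ_derivation D \<and> kQ_normalized D
           \<and> D arr_alpha = arr_alpha * kQ_of_poly a \<and> D arr_beta = kQ_of_poly b
           \<and> D arr_gamma = kQ_of_poly h * arr_gamma)
    \<and> (\<forall>(D :: 'k kQ \<Rightarrow> 'k kQ) a b h.
         kQ_derivation D \<and> kQ_normalized D
         \<and> D arr_alpha = arr_alpha * kQ_of_poly a \<and> D arr_beta = kQ_of_poly b
         \<and> D arr_gamma = kQ_of_poly h * arr_gamma \<longrightarrow>
         ((D ` ideal_I n n' n'' V \<subseteq> ideal_I n n' n'' V \<longleftrightarrow>
            (of_nat (gcd n (gcd n' n'')) * coeff b 0 = 0 \<and> Theta a b h ` V \<subseteq> V))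
          \<and> (D ` ideal_I n n' n'' V \<subseteq> ideal_I n n' n'' V \<longrightarrow>
             ((\<exists>u :: 'k kQ. \<forall>x. D x - (u * x - x * u) \<in> ideal_I n n' n'' V) \<longleftrightarrow>
              (monom 1 (min n' n'') dvd (a + h - [:coeff a 0 + coeff h 0:])
               \<and> monom 1 n dvd b)))))"
proof (intro conjI allI impI)
  fix D :: "'k kQ \<Rightarrow> 'k kQ"
  assume "kQ_derivation D \<and> kQ_normalized D"
  then show "\<exists>a b h. D arr_alpha = arr_alpha * kQ_of_poly a \<and> D arr_beta = kQ_of_poly b
                 \<and> D arr_gamma = kQ_of_poly h * arr_gamma"
    using part1 by blast
next
  fix a b h :: "'k poly"
  show "\<exists>!D :: 'k kQ \<Rightarrow> 'k kQ. kQ_derivation D \<and> kQ_normalized D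
           \<and> D arr_alpha = arr_alpha * kQ_of_poly a \<and> D arr_beta = kQ_of_poly b
           \<and> D arr_gamma = kQ_of_poly h * arr_gamma"
  proof (rule ex1I[of _ "Dexp a b h"])
    show "kQ_derivation (Dexp a b h) \<and> kQ_normalized (Dexp a b h) \<and>
      Dexp a b h arr_alpha = arr_alpha * kQ_of_poly a \<and> Dexp a b h arr_beta = kQ_of_poly b \<and>
      Dexp a b h arr_gamma = kQ_of_poly h * arr_gamma"
      using Dexp_der Dexp_norm Dexp_gens by blast
  next
    fix D :: "'k kQ \<Rightarrow> 'k kQ"
    assume "kQ_derivation D \<and> kQ_normalized D
           \<and> D arr_alpha = arr_alpha * kQ_of_poly a \<and> D arr_beta = kQ_of_poly b
           \<and> D arr_gamma = kQ_of_poly h * arr_gamma"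
    then show "D = Dexp a b h" using der_unique by blast
  qed
next
  fix D :: "'k kQ \<Rightarrow> 'k kQ" and a b h
  assume H: "kQ_derivation D \<and> kQ_normalized D
         \<and> D arr_alpha = arr_alpha * kQ_of_poly a \<and> D arr_beta = kQ_of_poly b
         \<and> D arr_gamma = kQ_of_poly h * arr_gamma"
  then have DD: "D = Dexp a b h" using der_unique by blast
  have I: "ideal_I n n' n'' V = Jset n n' n'' V" using ideal_eq assms by blast
  show "D ` ideal_I n n' n'' V \<subseteq> ideal_I n n' n'' V \<longleftrightarrow>
            (of_nat (gcd n (gcd n' n'')) * coeff b 0 = 0 \<and> Theta a b h ` V \<subseteq> V)"
    unfolding DD I using stable[of n' n'' n V a b h] assms by blast
  show "(\<exists>u :: 'k kQ. \<forall>x. D x - (u * x - x * u) \<in> ideal_I n n' n'' V) \<longleftrightarrow>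
              (monom 1 (min n' n'') dvd (a + h - [:coeff a 0 + coeff h 0:])
               \<and> monom 1 n dvd b)"
    unfolding DD I using inner[of n' n'' n V a b h] assms by blast
qed

end
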